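(* Let $\Sigma$ be a Markov shift with countable alphabet $I$, let $G$ be a countable group and $\Psi:I^*\to G$ a semigroup homomorphism, and let $\varphi:\Sigma\to\mathbb{R}$ be of medium variation and asymptotically $\alpha$-symmetric with respect to $\Psi$ for some $\alpha\ge1$. Then there exist Hölder continuous functions $\varphi_j:\Sigma\to\mathbb{R}$ and real numbers $D_j\ge1$, $j\in\mathbb{N}$, such that each $\varphi_j$ is asymptotically $\alpha D_j^{1/(2j)}$-symmetric with respect to $\Psi$, $\lim_j D_j^{1/(2j)}=1$, and $\varphi_j\to\varphi$ uniformly on compact subsets of $\Sigma$.
   Context: Markov shift: for a countable alphabet $I\subset\mathbb{N}$ and $A\in\{0,1\}^{I\times I}$, $\Sigma=\{\omega\in I^{\mathbb{N}}: a(\omega_i,\omega_{i+1})=1\ \forall i\}$ with product-of-discrete topology and left shift $\sigma$; $\Sigma^n$ admissible words of length $n$, $\Sigma^*=\bigcup_n\Sigma^n$, $|\omega|$ word length, $[\omega]$ cylinder. $\Psi(\omega)=\Psi(\omega_1)\cdots\Psi(\omega_n)$ for words. $S_n\varphi=\sum_{i<n}\varphi\circ\sigma^i$. Hölder continuous: for some $\beta>0$, $\sup\{|\varphi(\omega)-\varphi(\tau)|e^{\beta|\omega\wedge\tau|}:|\omega\wedge\tau|\ge1\}<\infty$, $|\omega\wedge\tau|$ the length of the longest common initial block. Medium variation: $\varphi$ is continuous and there is $(D_n)$ with $D_n^{1/n}\to1$ such that $e^{S_n\varphi(x)-S_n\varphi(y)}\le D_n$ for all $n$, $\omega\in\Sigma^n$,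 $x,y\in[\omega]$. Asymptotically $\alpha$-symmetric w.r.t. $\Psi$ ($\alpha\ge1$): there exist $n_0$, $(c_n)\subset\mathbb{R}^+$ with $c_n^{1/(2n)}\to\alpha$, $(N_n)\subset\mathbb{N}$ with $N_n/n\to0$, such that for all $g\in G$, $n\ge n_0$: $\sum_{\omega\in\Sigma^n:\Psi(\omega)=g}e^{\sup S_n\varphi|_{[\omega]}}\le c_n\sum_{\omega\in\Sigma^*:\Psi(\omega)=g^{-1},\ n-N_n\le|\omega|\le n+N_n}e^{\sup S_{|\omega|}\varphi|_{[\omega]}}$. *)

theory Defs
  imports "HOL-Analysis.Analysis"
begin

text \<open>Markov shift over alphabet I (subset of nat) with incidence relation A.
  Sequences are indexed from 0; words are lists.\<close>

definition shift_space :: "nat set \<Rightarrow> (nat \<Rightarrow> nat \<Rightarrow> bool) \<Rightarrow> (nat \<Rightarrow> nat) set" where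
  "shift_space I A = {x. \<forall>i. x i \<in> I \<and> A (x i) (x (Suc i))}"

definition shift :: "(nat \<Rightarrow> nat) \<Rightarrow> (nat \<Rightarrow> nat)" where
  "shift x = (\<lambda>i. x (Suc i))"

definition adm_words :: "nat set \<Rightarrow> (nat \<Rightarrow> nat \<Rightarrow> bool) \<Rightarrow> nat \<Rightarrow> nat list set" where
  "adm_words I A n = {w. length w = n \<and> set w \<subseteq> I \<and>
      (\<forall>i. Suc i < n \<longrightarrow> A (w ! i) (w ! Suc i))}"

text \<open>Nonempty admissible words (Sigma^*; Psi is defined on the free semigroup I^*).\<close>
definition adm_words_all :: "nat set \<Rightarrow> (nat \<Rightarrow> nat \<Rightarrow> bool) \<Rightarrow> nat list set" where
  "adm_words_all I A = (\<Union>n\<in>{1..}. adm_words I A n)"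

definition cylinder :: "nat set \<Rightarrow> (nat \<Rightarrow> nat \<Rightarrow> bool) \<Rightarrow> nat list \<Rightarrow> (nat \<Rightarrow> nat) set" where
  "cylinder I A w = {x \<in> shift_space I A. \<forall>i < length w. x i = w ! i}"

definition birkhoff_sum :: "((nat \<Rightarrow> nat) \<Rightarrow> real) \<Rightarrow> nat \<Rightarrow> (nat \<Rightarrow> nat) \<Rightarrow> real" where
  "birkhoff_sum \<phi> n x = (\<Sum>i<n. \<phi> ((shift ^^ i) x))"

text \<open>Psi extended from letters to words: Psi(w) = Psi(w_1) ... Psi(w_n) (group written additively).\<close>
definition word_hom :: "(nat \<Rightarrow> 'g::group_add) \<Rightarrow> nat list \<Rightarrow> 'g" where
  "word_hom \<Psi> w = sum_list (map \<Psi> w)"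

text \<open>exp (sup S_{|w|} phi on [w]); an empty cylinder contributes 0 (= exp(-infinity)).\<close>
definition cyl_weight :: "nat set \<Rightarrow> (nat \<Rightarrow> nat \<Rightarrow> bool) \<Rightarrow> ((nat \<Rightarrow> nat) \<Rightarrow> real) \<Rightarrow> nat list \<Rightarrow> ennreal" where
  "cyl_weight I A \<phi> w =
     (if cylinder I A w = {} then 0
      else ennreal (exp (SUP x\<in>cylinder I A w. birkhoff_sum \<phi> (length w) x)))"

definition holder_continuous :: "nat set \<Rightarrow> (nat \<Rightarrow> nat \<Rightarrow> bool) \<Rightarrow> ((nat \<Rightarrow> nat) \<Rightarrow> real) \<Rightarrow> bool" where
  "holder_continuous I A \<phi> \<longleftrightarrow> (\<exists>\<beta>>0. \<exists>C. \<forall>x\<in>shift_space I A. \<forall>y\<in>shift_space I A. \<forall>n\<ge>1.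
      (\<forall>i<n. x i = y i) \<longrightarrow> \<bar>\<phi> x - \<phi> y\<bar> * exp (\<beta> * real n) \<le> C)"

definition medium_variation :: "nat set \<Rightarrow> (nat \<Rightarrow> nat \<Rightarrow> bool) \<Rightarrow> ((nat \<Rightarrow> nat) \<Rightarrow> real) \<Rightarrow> bool" where
  "medium_variation I A \<phi> \<longleftrightarrow> continuous_on (shift_space I A) \<phi> \<and>
     (\<exists>D :: nat \<Rightarrow> real. (\<lambda>n. D n powr (1 / real n)) \<longlonglongrightarrow> 1 \<and>
        (\<forall>n. \<forall>w\<in>adm_words I A n. \<forall>x\<in>cylinder I A w. \<forall>y\<in>cylinder I A w.
            exp (birkhoff_sum \<phi> n x - birkhoff_sum \<phi> n y) \<le> D n))"

definition asymp_symmetric ::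
  "nat set \<Rightarrow> (nat \<Rightarrow> nat \<Rightarrow> bool) \<Rightarrow> (nat \<Rightarrow> 'g::group_add) \<Rightarrow> ((nat \<Rightarrow> nat) \<Rightarrow> real) \<Rightarrow> real \<Rightarrow> bool" where
  "asymp_symmetric I A \<Psi> \<phi> \<alpha> \<longleftrightarrow>
     (\<exists>n0 :: nat. \<exists>c :: nat \<Rightarrow> real. \<exists>N :: nat \<Rightarrow> nat.
        (\<forall>n. c n > 0) \<and>
        (\<lambda>n. c n powr (1 / (2 * real n))) \<longlonglongrightarrow> \<alpha> \<and>
        (\<lambda>n. real (N n) / real n) \<longlonglongrightarrow> 0 \<and>
        (\<forall>g. \<forall>n\<ge>n0.
           (\<Sum>\<^sub>\<infinity>w\<in>{w\<in>adm_words I A n. word_hom \<Psi> w = g}. cyl_weight I A \<phi> w)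
           \<le> ennreal (c n) *
             (\<Sum>\<^sub>\<infinity>w\<in>{w\<in>adm_words_all I A. word_hom \<Psi> w = - g \<and>
                  real n - real (N n) \<le> real (length w) \<and> real (length w) \<le> real n + real (N n)}.
                cyl_weight I A \<phi> w)))"

end

theory Submission
  imports Defs
begin

lemma shift_pow: "(shift ^^ i) x = (\<lambda>k. x (k + i))"
  by (induction i arbitrary: x) (auto simp: shift_def)

lemma shift_pow_mem: "x \<in> shift_space I A \<Longrightarrow> (shift ^^ i) x \<in> shift_space I A"
  by (auto simp: shift_pow shift_space_def)

lemma shift_mem: "x \<in> shift_space I A \<Longrightarrow> shift x \<in> shift_space I A"
  by (auto simp: shift_def shift_space_def)

lemma birkhoff_Suc: "birkhoff_sum f (Suc m) y = f y + birkhoff_sum f m (shift y)"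
  unfolding birkhoff_sum_def
  by (subst sum.lessThan_Suc_shift) (simp add: funpow_Suc_right del: funpow.simps)

definition zpt :: "nat set \<Rightarrow> (nat \<Rightarrow> nat \<Rightarrow> bool) \<Rightarrow> nat \<Rightarrow> (nat \<Rightarrow> nat)" where
  "zpt I A a = (SOME z. z \<in> shift_space I A \<and> z 0 = a)"

definition pext :: "nat set \<Rightarrow> (nat \<Rightarrow> nat \<Rightarrow> bool) \<Rightarrow> nat \<Rightarrow> (nat \<Rightarrow> nat) \<Rightarrow> (nat \<Rightarrow> nat)" where
  "pext I A l x = (\<lambda>k. if k < l then x k else zpt I A (x (l - 1)) (k + 1 - l))"

lemma zpt: assumes "x \<in> shift_space I A"
  shows "zpt I A (x m) \<in> shift_space I A \<and> zpt I A (x m) 0 = x m"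
proof -
  have "(shift ^^ m) x \<in> shift_space I A \<and> (shift ^^ m) x 0 = x m"
    using shift_pow_mem[OF assms] by (simp add: shift_pow)
  then show ?thesis unfolding zpt_def by (rule someI[where P="\<lambda>z. z \<in> shift_space I A \<and> z 0 = x m"])
qed

lemma pext_mem: assumes "x \<in> shift_space I A" "l \<ge> 1"
  shows "pext I A l x \<in> shift_space I A"
proof -
  let ?z = "zpt I A (x (l - 1))"
  have z: "?z \<in> shift_space I A" "?z 0 = x (l - 1)" using zpt[OF assms(1)] by auto
  show ?thesis unfolding shift_space_def pext_def
  proof (intro CollectI allI conjI)
    fix i
    show "(if i < l then x i else ?z (i + 1 - l)) \<in> I"
      using assms z by (auto simp: shift_space_def)
    show "A (if i < l then x i else ?z (i + 1 - l)) (if Suc i < l then x (Suc i) else ?z (Suc i + 1 - l))"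
    proof (cases "Suc i < l")
      case True then show ?thesis using assms(1) by (auto simp: shift_space_def)
    next
      case False
      show ?thesis
      proof (cases "i < l")
        case True
        with False have "i = l - 1" by auto
        have "A (?z 0) (?z 1)" using z(1) by (auto simp: shift_space_def)
        then show ?thesis using z False True \<open>i = l - 1\<close> by auto
      next
        case F2: False
        then have "Suc i + 1 - l = Suc (i + 1 - l)" by auto
        then show ?thesis using z F2 False by (auto simp: shift_space_def)
      qed
    qed
  qed
qed

lemma pext_agree: "k < l \<Longrightarrow> pext I A l x k = x k"
  by (simp add: pext_def)

lemma shift_pext: assumes "l \<ge> 2"
  shows "shift (pext I A l x) = pext I A (l - 1) (shift x)"
proof
  fix k
  show "shift (pext I A l x) k = pext I A (l - 1) (shift x) k"
  proof -
    have e: "Suc (l - Suc (Suc 0)) = l - Suc 0" using assms by auto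
    show ?thesis using assms by (auto simp: shift_def pext_def Suc_diff_le e)
  qed
qed

lemma word_adm: assumes "y \<in> shift_space I A"
  shows "map y [0..<l] \<in> adm_words I A l" "y \<in> cylinder I A (map y [0..<l])"
  using assms by (auto simp: adm_words_def shift_space_def cylinder_def)

lemma pext_cyl: assumes "y \<in> shift_space I A" "l \<ge> 1"
  shows "pext I A l y \<in> cylinder I A (map y [0..<l])"
  using pext_mem[OF assms] by (auto simp: cylinder_def pext_def)

lemma exp_le_ln: "exp (t::real) \<le> D \<Longrightarrow> t \<le> ln (max 1 D)"
proof -
  assume h: "exp t \<le> D"
  then have "D > 0" using exp_gt_zero[of t] by linarith
  then have "t \<le> ln D" using h by (metis exp_le_cancel_iff exp_ln)
  also have "ln D \<le> ln (max 1 D)" using \<open>D > 0\<close> by simp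
  finally show ?thesis .
qed

lemma eps_bound:
  assumes mv: "\<forall>n. \<forall>w\<in>adm_words I A n. \<forall>x\<in>cylinder I A w. \<forall>y\<in>cylinder I A w.
            exp (birkhoff_sum \<phi> n x - birkhoff_sum \<phi> n y) \<le> D n"
    and y: "y \<in> shift_space I A" and l: "l \<ge> 1"
  shows "\<bar>birkhoff_sum \<phi> l (pext I A l y) - birkhoff_sum \<phi> l y\<bar> \<le> ln (max 1 (D l))"
proof -
  have w: "map y [0..<l] \<in> adm_words I A l" and c1: "y \<in> cylinder I A (map y [0..<l])"
    using word_adm[OF y] by auto
  have c2: "pext I A l y \<in> cylinder I A (map y [0..<l])" using pext_cyl[OF y l] .
  have "exp (birkhoff_sum \<phi> l (pext I A l y) - birkhoff_sum \<phi> l y) \<le> D l"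
    by (rule mv[rule_format, OF w c2 c1])
  moreover have "exp (birkhoff_sum \<phi> l y - birkhoff_sum \<phi> l (pext I A l y)) \<le> D l"
    by (rule mv[rule_format, OF w c1 c2])
  ultimately show ?thesis using exp_le_ln[of "birkhoff_sum \<phi> l (pext I A l y) - birkhoff_sum \<phi> l y" "D l"] exp_le_ln[of "birkhoff_sum \<phi> l y - birkhoff_sum \<phi> l (pext I A l y)" "D l"] by linarith
qed

lemma comb_bound:
  fixes e :: "nat \<Rightarrow> nat \<Rightarrow> real"
  assumes j: "j \<ge> 1" and b: "\<And>i l. j \<le> l \<Longrightarrow> l \<le> 2 * j \<Longrightarrow> \<bar>e i l\<bar> \<le> L"
  shows "\<bar>\<Sum>i<n. \<Sum>l\<in>{j+1..2*j}. (e i l - e (Suc i) (l - 1))\<bar> \<le> 2 * (real n + real j) * L"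
proof -
  define H where "H i = (\<Sum>l\<in>{j..<2*j}. e i l)" for i
  have G: "(\<Sum>l\<in>{j+1..2*j}. e i l) = H i + e i (2*j) - e i j" for i
  proof -
    have s1: "{j+1..2*j} = insert (2*j) {j<..<2*j}" using j by auto
    have s2: "{j..<2*j} = insert j {j<..<2*j}" using j by auto
    have "(\<Sum>l\<in>{j+1..2*j}. e i l) = (\<Sum>l\<in>{j<..<2*j}. e i l) + e i (2*j)"
      unfolding s1 by simp
    moreover have "H i = e i j + (\<Sum>l\<in>{j<..<2*j}. e i l)"
      unfolding H_def s2 by simp
    ultimately show ?thesis by simp
  qed
  have Hs: "(\<Sum>l\<in>{j+1..2*j}. e (Suc i) (l - 1)) = H (Suc i)" for i
  proof -
    have "(\<Sum>l\<in>{j+1..2*j}. e (Suc i) (l - 1)) = (\<Sum>l\<in>{j..<2*j}. e (Suc i) l)"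
      using j by (intro sum.reindex_bij_witness[of _ "\<lambda>l. l + 1" "\<lambda>l. l - 1"]) auto
    then show ?thesis by (simp add: H_def)
  qed
  have eq: "(\<Sum>i<n. \<Sum>l\<in>{j+1..2*j}. (e i l - e (Suc i) (l - 1))) =
      H 0 - H n + (\<Sum>i<n. e i (2*j) - e i j)"
  proof (induction n)
    case 0 then show ?case by simp
  next
    case (Suc n)
    have "(\<Sum>l\<in>{j+1..2*j}. (e n l - e (Suc n) (l - 1))) = H n + e n (2*j) - e n j - H (Suc n)"
      using G[of n] Hs[of n] by (simp add: sum_subtractf)
    then show ?case using Suc by simp
  qed
  have hb: "\<bar>H i\<bar> \<le> real j * L" for i
  proof -
    have "\<bar>H i\<bar> \<le> (\<Sum>l\<in>{j..<2*j}. \<bar>e i l\<bar>)" unfolding H_def by (rule sum_abs)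
    also have "\<dots> \<le> (\<Sum>l\<in>{j..<2*j}. L)" by (intro sum_mono b) auto
    finally show ?thesis by simp
  qed
  have sb: "\<bar>\<Sum>i<n. e i (2*j) - e i j\<bar> \<le> real n * (2 * L)"
  proof -
    have "\<bar>\<Sum>i<n. e i (2*j) - e i j\<bar> \<le> (\<Sum>i<n. \<bar>e i (2*j) - e i j\<bar>)" by (rule sum_abs)
    also have "\<dots> \<le> (\<Sum>i<n. 2 * L)"
    proof (intro sum_mono)
      fix i
      have "\<bar>e i (2*j)\<bar> \<le> L" "\<bar>e i j\<bar> \<le> L" using b j by auto
      then show "\<bar>e i (2*j) - e i j\<bar> \<le> 2 * L" by linarith
    qed
    finally show ?thesis by simp
  qed
  have "\<bar>H 0 - H n + (\<Sum>i<n. e i (2*j) - e i j)\<bar> \<le> real j * L + real j * L + real n * (2 * L)"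
    using hb[of 0] hb[of n] sb by linarith
  then show ?thesis unfolding eq by (simp add: algebra_simps)
qed

definition Phi :: "nat set \<Rightarrow> (nat \<Rightarrow> nat \<Rightarrow> bool) \<Rightarrow> ((nat \<Rightarrow> nat) \<Rightarrow> real) \<Rightarrow> nat \<Rightarrow> (nat \<Rightarrow> nat) \<Rightarrow> real" where
  "Phi I A \<phi> j x = (\<Sum>l\<in>{j+1..2*j}. \<phi> (pext I A l x)) / real j"

lemma pointwise:
  assumes mv: "\<forall>n. \<forall>w\<in>adm_words I A n. \<forall>x\<in>cylinder I A w. \<forall>y\<in>cylinder I A w.
            exp (birkhoff_sum \<phi> n x - birkhoff_sum \<phi> n y) \<le> D n"
    and x: "x \<in> shift_space I A" and j: "j \<ge> 1"
    and Lb: "\<And>l. j \<le> l \<Longrightarrow> l \<le> 2 * j \<Longrightarrow> ln (max 1 (D l)) \<le> L"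
  shows "\<bar>birkhoff_sum (Phi I A \<phi> j) n x - birkhoff_sum \<phi> n x\<bar> \<le> 2 * (real n + real j) * L / real j"
proof -
  define y where "y i = (shift ^^ i) x" for i
  have ymem: "y i \<in> shift_space I A" for i unfolding y_def using shift_pow_mem[OF x] .
  have ysuc: "shift (y i) = y (Suc i)" for i unfolding y_def by simp
  define e where "e i l = birkhoff_sum \<phi> l (pext I A l (y i)) - birkhoff_sum \<phi> l (y i)" for i l
  have eb: "\<bar>e i l\<bar> \<le> L" if "j \<le> l" "l \<le> 2 * j" for i l
  proof -
    have "\<bar>e i l\<bar> \<le> ln (max 1 (D l))" unfolding e_def
      by (rule eps_bound[OF mv ymem]) (use that j in auto)
    also have "\<dots> \<le> L" using Lb that by auto
    finally show ?thesis .
  qed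
  have key: "\<phi> (pext I A l (y i)) - \<phi> (y i) = e i l - e (Suc i) (l - 1)" if "l \<ge> 2" for i l
  proof -
    define m where "m = l - 1"
    have m: "l = Suc m" "m \<ge> 1" using that unfolding m_def by auto
    have "birkhoff_sum \<phi> l (pext I A l (y i)) = \<phi> (pext I A l (y i)) + birkhoff_sum \<phi> m (pext I A m (y (Suc i)))"
      using m shift_pext[OF that, of I A "y i"] by (simp add: birkhoff_Suc ysuc)
    moreover have "birkhoff_sum \<phi> l (y i) = \<phi> (y i) + birkhoff_sum \<phi> m (y (Suc i))"
      using m by (simp add: birkhoff_Suc ysuc)
    ultimately show ?thesis unfolding e_def using m by simp
  qed
  have cardj: "card {j+1..2*j} = j" by simp
  have trm: "Phi I A \<phi> j (y i) - \<phi> (y i) = (\<Sum>l\<in>{j+1..2*j}. (e i l - e (Suc i) (l - 1))) / real j" for i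
  proof -
    have "(\<Sum>l\<in>{j+1..2*j}. (e i l - e (Suc i) (l - 1))) = (\<Sum>l\<in>{j+1..2*j}. \<phi> (pext I A l (y i)) - \<phi> (y i))"
      using j by (intro sum.cong) (auto simp: key)
    also have "\<dots> = (\<Sum>l\<in>{j+1..2*j}. \<phi> (pext I A l (y i))) - real j * \<phi> (y i)"
      by (simp add: sum_subtractf cardj)
    finally show ?thesis using j unfolding Phi_def by (simp add: field_simps)
  qed
  have "birkhoff_sum (Phi I A \<phi> j) n x - birkhoff_sum \<phi> n x = (\<Sum>i<n. Phi I A \<phi> j (y i) - \<phi> (y i))"
    unfolding birkhoff_sum_def y_def by (simp add: sum_subtractf)
  also have "\<dots> = (\<Sum>i<n. \<Sum>l\<in>{j+1..2*j}. (e i l - e (Suc i) (l - 1))) / real j"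
    by (simp add: trm sum_divide_distrib)
  finally have eq: "birkhoff_sum (Phi I A \<phi> j) n x - birkhoff_sum \<phi> n x = (\<Sum>i<n. \<Sum>l\<in>{j+1..2*j}. (e i l - e (Suc i) (l - 1))) / real j" .
  have "\<bar>\<Sum>i<n. \<Sum>l\<in>{j+1..2*j}. (e i l - e (Suc i) (l - 1))\<bar> \<le> 2 * (real n + real j) * L"
    by (rule comb_bound[OF j eb])
  then show ?thesis unfolding eq using j by (simp add: divide_right_mono)
qed

lemma cyl_adm: assumes "x \<in> cylinder I A w" shows "w \<in> adm_words I A (length w)"
proof -
  have x: "x \<in> shift_space I A" "\<And>i. i < length w \<Longrightarrow> x i = w ! i" using assms by (auto simp: cylinder_def)
  have "set w \<subseteq> I"
  proof
    fix a assume "a \<in> set w"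
    then obtain i where "i < length w" "w ! i = a" by (auto simp: in_set_conv_nth)
    then show "a \<in> I" using x(1) x(2)[of i] unfolding shift_space_def by (metis (mono_tags, lifting) mem_Collect_eq)
  qed
  moreover have "A (w ! i) (w ! Suc i)" if "Suc i < length w" for i
    using x(1) x(2)[of i] x(2)[of "Suc i"] that unfolding shift_space_def by (metis (mono_tags, lifting) mem_Collect_eq Suc_lessD)
  ultimately show ?thesis by (auto simp: adm_words_def)
qed

lemma cyl_bdd:
  assumes mv: "\<forall>n. \<forall>w\<in>adm_words I A n. \<forall>x\<in>cylinder I A w. \<forall>y\<in>cylinder I A w.
            exp (birkhoff_sum \<phi> n x - birkhoff_sum \<phi> n y) \<le> D n"
  shows "bdd_above ((birkhoff_sum \<phi> (length w)) ` cylinder I A w)"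
proof (cases "cylinder I A w = {}")
  case True then show ?thesis by simp
next
  case False
  then obtain y where y: "y \<in> cylinder I A w" by auto
  have w: "w \<in> adm_words I A (length w)" using cyl_adm[OF y] .
  show ?thesis
  proof (rule bdd_aboveI2)
    fix x assume x: "x \<in> cylinder I A w"
    have "exp (birkhoff_sum \<phi> (length w) x - birkhoff_sum \<phi> (length w) y) \<le> D (length w)"
      by (rule mv[rule_format, OF w x y])
    then have "birkhoff_sum \<phi> (length w) x - birkhoff_sum \<phi> (length w) y \<le> ln (max 1 (D (length w)))"
      by (rule exp_le_ln)
    then show "birkhoff_sum \<phi> (length w) x \<le> birkhoff_sum \<phi> (length w) y + ln (max 1 (D (length w)))"
      by linarith
  qed
qed

lemma cw_le:
  assumes le: "\<And>x. x \<in> cylinder I A w \<Longrightarrow> birkhoff_sum \<psi> (length w) x \<le> birkhoff_sum \<phi> (length w) x + \<Delta>"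
    and bdd: "bdd_above ((birkhoff_sum \<phi> (length w)) ` cylinder I A w)"
  shows "cyl_weight I A \<psi> w \<le> ennreal (exp \<Delta>) * cyl_weight I A \<phi> w"
proof (cases "cylinder I A w = {}")
  case True then show ?thesis by (simp add: cyl_weight_def)
next
  case False
  let ?C = "cylinder I A w"
  have "(SUP x\<in>?C. birkhoff_sum \<psi> (length w) x) \<le> (SUP x\<in>?C. birkhoff_sum \<phi> (length w) x) + \<Delta>"
  proof (rule cSUP_least[OF False])
    fix x assume x: "x \<in> ?C"
    have "birkhoff_sum \<phi> (length w) x \<le> (SUP x\<in>?C. birkhoff_sum \<phi> (length w) x)"
      by (rule cSUP_upper[OF x bdd])
    then show "birkhoff_sum \<psi> (length w) x \<le> (SUP x\<in>?C. birkhoff_sum \<phi> (length w) x) + \<Delta>"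
      using le[OF x] by linarith
  qed
  then have "exp (SUP x\<in>?C. birkhoff_sum \<psi> (length w) x) \<le> exp \<Delta> * exp (SUP x\<in>?C. birkhoff_sum \<phi> (length w) x)"
    by (simp add: exp_add[symmetric] add.commute)
  then have "ennreal (exp (SUP x\<in>?C. birkhoff_sum \<psi> (length w) x)) \<le> ennreal (exp \<Delta>) * ennreal (exp (SUP x\<in>?C. birkhoff_sum \<phi> (length w) x))"
    by (simp add: ennreal_mult[symmetric] ennreal_leI)
  then show ?thesis using False by (simp add: cyl_weight_def)
qed

lemma infsum_cmult_ennreal:
  assumes "c < top" shows "(\<Sum>\<^sub>\<infinity>x\<in>A. c * f x) = c * (\<Sum>\<^sub>\<infinity>x\<in>A. (f x :: ennreal))"
proof -
  have "f summable_on A" by (rule nonneg_summable_on_complete) simp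
  then have "(f has_sum infsum f A) A" by (rule has_sum_infsum)
  then have "((\<lambda>F. c * sum f F) \<longlongrightarrow> c * infsum f A) (finite_subsets_at_top A)"
    unfolding has_sum_def by (rule ennreal_tendsto_cmult[OF assms])
  moreover have "(\<lambda>F. sum (\<lambda>x. c * f x) F) = (\<lambda>F. c * sum f F)" by (simp add: sum_distrib_left)
  ultimately have "((\<lambda>x. c * f x) has_sum (c * infsum f A)) A"
    unfolding has_sum_def by simp
  then show ?thesis by (rule infsumI)
qed

lemma transfer:
  fixes \<Psi> :: "nat \<Rightarrow> 'g::group_add"
  assumes as: "asymp_symmetric I A \<Psi> \<phi> \<alpha>"
    and mv: "\<forall>n. \<forall>w\<in>adm_words I A n. \<forall>x\<in>cylinder I A w. \<forall>y\<in>cylinder I A w.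
            exp (birkhoff_sum \<phi> n x - birkhoff_sum \<phi> n y) \<le> D n"
    and a: "a \<ge> 0" and b: "b \<ge> 0"
    and cl: "\<And>w x. x \<in> cylinder I A w \<Longrightarrow>
       \<bar>birkhoff_sum \<psi> (length w) x - birkhoff_sum \<phi> (length w) x\<bar> \<le> a + b * real (length w)"
  shows "asymp_symmetric I A \<Psi> \<psi> (\<alpha> * exp b)"
proof -
  obtain n0 :: nat and c :: "nat \<Rightarrow> real" and N :: "nat \<Rightarrow> nat" where
    cpos: "\<forall>n. c n > 0" and clim: "(\<lambda>n. c n powr (1 / (2 * real n))) \<longlonglongrightarrow> \<alpha>"
    and Nlim: "(\<lambda>n. real (N n) / real n) \<longlonglongrightarrow> 0"
    and ineq: "\<forall>g. \<forall>n\<ge>n0.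
           (\<Sum>\<^sub>\<infinity>w\<in>{w\<in>adm_words I A n. word_hom \<Psi> w = g}. cyl_weight I A \<phi> w)
           \<le> ennreal (c n) *
             (\<Sum>\<^sub>\<infinity>w\<in>{w\<in>adm_words_all I A. word_hom \<Psi> w = - g \<and>
                  real n - real (N n) \<le> real (length w) \<and> real (length w) \<le> real n + real (N n)}.
                cyl_weight I A \<phi> w)"
    using as unfolding asymp_symmetric_def by blast
  define K1 where "K1 n = exp (a + b * real n)" for n :: nat
  define K2 where "K2 n = exp (a + b * (real n + real (N n)))" for n :: nat
  define c' where "c' n = c n * exp (2 * a + (2 * real n + real (N n)) * b)" for n :: nat
  have c'eq: "c' n = K1 n * c n * K2 n" for n
    unfolding c'_def K1_def K2_def by (simp add: exp_add[symmetric] algebra_simps)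
  have bddphi: "bdd_above ((birkhoff_sum \<phi> (length w)) ` cylinder I A w)" for w
    by (rule cyl_bdd[OF mv])
  have bddpsi: "bdd_above ((birkhoff_sum \<psi> (length w)) ` cylinder I A w)" for w
  proof -
    obtain M where M: "\<And>x. x \<in> cylinder I A w \<Longrightarrow> birkhoff_sum \<phi> (length w) x \<le> M"
      using bddphi[of w] by (auto simp: bdd_above_def)
    show ?thesis
    proof (rule bdd_aboveI2)
      fix x assume "x \<in> cylinder I A w"
      then show "birkhoff_sum \<psi> (length w) x \<le> M + (a + b * real (length w))"
        using M[of x] cl[of x w] by (simp add: abs_le_iff)
    qed
  qed
  have ineq': "(\<Sum>\<^sub>\<infinity>w\<in>{w\<in>adm_words I A n. word_hom \<Psi> w = g}. cyl_weight I A \<psi> w)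
           \<le> ennreal (c' n) *
             (\<Sum>\<^sub>\<infinity>w\<in>{w\<in>adm_words_all I A. word_hom \<Psi> w = - g \<and>
                  real n - real (N n) \<le> real (length w) \<and> real (length w) \<le> real n + real (N n)}.
                cyl_weight I A \<psi> w)" if n: "n \<ge> n0" for g n
  proof -
    let ?S = "{w\<in>adm_words I A n. word_hom \<Psi> w = g}"
    let ?T = "{w\<in>adm_words_all I A. word_hom \<Psi> w = - g \<and>
                  real n - real (N n) \<le> real (length w) \<and> real (length w) \<le> real n + real (N n)}"
    have "(\<Sum>\<^sub>\<infinity>w\<in>?S. cyl_weight I A \<psi> w) \<le> (\<Sum>\<^sub>\<infinity>w\<in>?S. ennreal (K1 n) * cyl_weight I A \<phi> w)"
    proof (rule infsum_mono)
      fix w assume w: "w \<in> ?S"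
      then have len: "length w = n" by (auto simp: adm_words_def)
      show "cyl_weight I A \<psi> w \<le> ennreal (K1 n) * cyl_weight I A \<phi> w"
        unfolding K1_def
      proof (rule cw_le[OF _ bddphi])
        fix x assume "x \<in> cylinder I A w"
        then show "birkhoff_sum \<psi> (length w) x \<le> birkhoff_sum \<phi> (length w) x + (a + b * real n)"
          using cl[of x w] len by (simp add: abs_le_iff)
      qed
    qed (auto intro: nonneg_summable_on_complete)
    also have "\<dots> = ennreal (K1 n) * (\<Sum>\<^sub>\<infinity>w\<in>?S. cyl_weight I A \<phi> w)"
      by (rule infsum_cmult_ennreal) simp
    also have "\<dots> \<le> ennreal (K1 n) * (ennreal (c n) * (\<Sum>\<^sub>\<infinity>w\<in>?T. cyl_weight I A \<phi> w))"
      using ineq n by (intro mult_left_mono) auto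
    also have "(\<Sum>\<^sub>\<infinity>w\<in>?T. cyl_weight I A \<phi> w) \<le> (\<Sum>\<^sub>\<infinity>w\<in>?T. ennreal (K2 n) * cyl_weight I A \<psi> w)"
    proof (rule infsum_mono)
      fix w assume w: "w \<in> ?T"
      then have len: "real (length w) \<le> real n + real (N n)" by auto
      show "cyl_weight I A \<phi> w \<le> ennreal (K2 n) * cyl_weight I A \<psi> w"
        unfolding K2_def
      proof (rule cw_le[OF _ bddpsi])
        fix x assume "x \<in> cylinder I A w"
        moreover have "b * real (length w) \<le> b * (real n + real (N n))"
          using len b by (rule mult_left_mono)
        ultimately show "birkhoff_sum \<phi> (length w) x \<le> birkhoff_sum \<psi> (length w) x + (a + b * (real n + real (N n)))"
          using cl[of x w] by (simp add: abs_le_iff)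
      qed
    qed (auto intro: nonneg_summable_on_complete)
    also have "(\<Sum>\<^sub>\<infinity>w\<in>?T. ennreal (K2 n) * cyl_weight I A \<psi> w) = ennreal (K2 n) * (\<Sum>\<^sub>\<infinity>w\<in>?T. cyl_weight I A \<psi> w)"
      by (rule infsum_cmult_ennreal) simp
    finally have "(\<Sum>\<^sub>\<infinity>w\<in>?S. cyl_weight I A \<psi> w) \<le>
        ennreal (K1 n) * (ennreal (c n) * (ennreal (K2 n) * (\<Sum>\<^sub>\<infinity>w\<in>?T. cyl_weight I A \<psi> w)))"
      by (simp add: mult_left_mono)
    also have "\<dots> = ennreal (c' n) * (\<Sum>\<^sub>\<infinity>w\<in>?T. cyl_weight I A \<psi> w)"
      unfolding c'eq using cpos[rule_format, of n]
      by (simp add: K1_def K2_def ennreal_mult mult.assoc)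
    finally show ?thesis .
  qed
  have c'pos: "\<forall>n. c' n > 0" using cpos unfolding c'_def by simp
  have c'lim: "(\<lambda>n. c' n powr (1 / (2 * real n))) \<longlonglongrightarrow> \<alpha> * exp b"
  proof -
    have e: "c' n powr (1 / (2 * real n)) = c n powr (1 / (2 * real n)) *
        exp (a / real n + b + (real (N n) / real n) * (b / 2))" if "n \<ge> 1" for n
    proof -
      have "c' n powr (1 / (2 * real n)) = c n powr (1 / (2 * real n)) *
          exp (2 * a + (2 * real n + real (N n)) * b) powr (1 / (2 * real n))"
        unfolding c'_def using cpos by (simp add: powr_mult)
      also have "exp (2 * a + (2 * real n + real (N n)) * b) powr (1 / (2 * real n)) =
          exp ((2 * a + (2 * real n + real (N n)) * b) * (1 / (2 * real n)))"
        by (simp add: powr_def)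
      also have "(2 * a + (2 * real n + real (N n)) * b) * (1 / (2 * real n)) =
          a / real n + b + (real (N n) / real n) * (b / 2)"
        using that by (simp add: field_simps)
      finally show ?thesis .
    qed
    have "(\<lambda>n. c n powr (1 / (2 * real n)) * exp (a / real n + b + (real (N n) / real n) * (b / 2)))
        \<longlonglongrightarrow> \<alpha> * exp (0 + b + 0 * (b / 2))"
      by (intro tendsto_intros clim Nlim tendsto_divide_0[OF tendsto_const] filterlim_real_sequentially)
    then have "(\<lambda>n. c n powr (1 / (2 * real n)) * exp (a / real n + b + (real (N n) / real n) * (b / 2)))
        \<longlonglongrightarrow> \<alpha> * exp b" by simp
    then show ?thesis
      by (rule Lim_transform_eventually) (use e in \<open>auto intro!: eventually_sequentiallyI[of 1]\<close>)
  qed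
  show ?thesis unfolding asymp_symmetric_def
    using c'pos c'lim Nlim ineq' by blast
qed

lemma holder_Phi:
  assumes mv: "\<forall>n. \<forall>w\<in>adm_words I A n. \<forall>x\<in>cylinder I A w. \<forall>y\<in>cylinder I A w.
            exp (birkhoff_sum \<phi> n x - birkhoff_sum \<phi> n y) \<le> D n"
    and j: "j \<ge> 1"
  shows "holder_continuous I A (Phi I A \<phi> j)"
proof -
  define V where "V = ln (max 1 (D 1))"
  have V0: "V \<ge> 0" unfolding V_def by simp
  have one: "\<bar>\<phi> (pext I A l x) - \<phi> (pext I A l y)\<bar> \<le> V"
    if x: "x \<in> shift_space I A" and y: "y \<in> shift_space I A" and xy: "x 0 = y 0" and l: "l \<ge> 1" for x y l
  proof -
    have w: "map x [0..<1] \<in> adm_words I A 1" using word_adm[OF x] by blast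
    have c1: "pext I A l x \<in> cylinder I A (map x [0..<1])"
      using pext_mem[OF x l] l by (auto simp: cylinder_def pext_def)
    have c2: "pext I A l y \<in> cylinder I A (map x [0..<1])"
      using pext_mem[OF y l] l xy by (auto simp: cylinder_def pext_def)
    have b1: "\<And>z. birkhoff_sum \<phi> (Suc 0) z = \<phi> z" by (simp add: birkhoff_sum_def)
    have "exp (\<phi> (pext I A l x) - \<phi> (pext I A l y)) \<le> D 1"
      using mv[rule_format, OF w c1 c2] by (simp only: One_nat_def b1)
    moreover have "exp (\<phi> (pext I A l y) - \<phi> (pext I A l x)) \<le> D 1"
      using mv[rule_format, OF w c2 c1] by (simp only: One_nat_def b1)
    ultimately show ?thesis unfolding V_def
      using exp_le_ln[of "\<phi> (pext I A l x) - \<phi> (pext I A l y)" "D 1"]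
        exp_le_ln[of "\<phi> (pext I A l y) - \<phi> (pext I A l x)" "D 1"] by linarith
  qed
  have diff: "\<bar>Phi I A \<phi> j x - Phi I A \<phi> j y\<bar> \<le> V"
    if x: "x \<in> shift_space I A" and y: "y \<in> shift_space I A" and xy: "x 0 = y 0" for x y
  proof -
    have "Phi I A \<phi> j x - Phi I A \<phi> j y = (\<Sum>l\<in>{j+1..2*j}. \<phi> (pext I A l x) - \<phi> (pext I A l y)) / real j"
      unfolding Phi_def by (simp add: sum_subtractf diff_divide_distrib)
    moreover have "\<bar>\<Sum>l\<in>{j+1..2*j}. \<phi> (pext I A l x) - \<phi> (pext I A l y)\<bar> \<le> real j * V"
    proof -
      have "\<bar>\<Sum>l\<in>{j+1..2*j}. \<phi> (pext I A l x) - \<phi> (pext I A l y)\<bar> \<le> (\<Sum>l\<in>{j+1..2*j}. \<bar>\<phi> (pext I A l x) - \<phi> (pext I A l y)\<bar>)"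
        by (rule sum_abs)
      also have "\<dots> \<le> (\<Sum>l\<in>{j+1..2*j}. V)" by (intro sum_mono one[OF x y xy]) auto
      finally show ?thesis by simp
    qed
    ultimately show ?thesis using j by (simp add: divide_le_eq mult.commute)
  qed
  have same: "Phi I A \<phi> j x = Phi I A \<phi> j y" if "\<forall>i<n. x i = y i" "n \<ge> 2 * j" for x y n
  proof -
    have "pext I A l x = pext I A l y" if "l \<in> {j+1..2*j}" for l
      using that \<open>\<forall>i<n. x i = y i\<close> \<open>n \<ge> 2 * j\<close> unfolding pext_def by (intro ext) auto
    then show ?thesis unfolding Phi_def by (metis (no_types, lifting) sum.cong)
  qed
  show ?thesis unfolding holder_continuous_def
  proof (rule exI[of _ "1::real"], intro conjI exI[of _ "V * exp (2 * real j)"] ballI allI impI)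
    fix x y n assume x: "x \<in> shift_space I A" and y: "y \<in> shift_space I A" and n: "1 \<le> n" and agr: "\<forall>i<n. x i = y i"
    show "\<bar>Phi I A \<phi> j x - Phi I A \<phi> j y\<bar> * exp (1 * real n) \<le> V * exp (2 * real j)"
    proof (cases "n \<ge> 2 * j")
      case True then show ?thesis using same[OF agr] V0 by simp
    next
      case False
      have "x 0 = y 0" using agr n by auto
      then have d: "\<bar>Phi I A \<phi> j x - Phi I A \<phi> j y\<bar> \<le> V" by (rule diff[OF x y])
      have "exp (1 * real n) \<le> exp (2 * real j)" using False by simp
      then show ?thesis using d V0 by (intro mult_mono) auto
    qed
  qed simp
qed

lemma a_lim:
  assumes "(\<lambda>n. D n powr (1 / real n)) \<longlonglongrightarrow> 1"
  shows "(\<lambda>l. ln (max 1 (D l)) / real l) \<longlonglongrightarrow> 0"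
proof (rule tendsto_sandwich[of "\<lambda>_. 0" _ _ "\<lambda>l. ln (max 1 (D l powr (1 / real l)))"])
  show "\<forall>\<^sub>F l in sequentially. 0 \<le> ln (max 1 (D l)) / real l" by simp
  show "\<forall>\<^sub>F l in sequentially. ln (max 1 (D l)) / real l \<le> ln (max 1 (D l powr (1 / real l)))"
  proof (rule eventually_sequentiallyI[of 1])
    fix l :: nat assume l: "l \<ge> 1"
    show "ln (max 1 (D l)) / real l \<le> ln (max 1 (D l powr (1 / real l)))"
    proof (cases "D l \<ge> 1")
      case True
      then have "ln (max 1 (D l)) / real l = ln (D l powr (1 / real l))" by simp
      also have "\<dots> \<le> ln (max 1 (D l powr (1 / real l)))"
        using True by (subst ln_le_cancel_iff) auto
      finally show ?thesis .
    next
      case False then show ?thesis by simp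
    qed
  qed
  show "(\<lambda>_. 0::real) \<longlonglongrightarrow> 0" by simp
  have "(\<lambda>l. ln (max 1 (D l powr (1 / real l)))) \<longlonglongrightarrow> ln (max 1 1)"
    by (intro tendsto_intros assms) auto
  then show "(\<lambda>l. ln (max 1 (D l powr (1 / real l)))) \<longlonglongrightarrow> 0" by simp
qed

definition Lm :: "(nat \<Rightarrow> real) \<Rightarrow> nat \<Rightarrow> real" where
  "Lm D j = Max ((\<lambda>l. ln (max 1 (D l))) ` {j..2*j})"

lemma Lm_ge: "j \<le> l \<Longrightarrow> l \<le> 2 * j \<Longrightarrow> ln (max 1 (D l)) \<le> Lm D j"
  unfolding Lm_def by (rule Max_ge) auto

lemma Lm_nonneg: "Lm D j \<ge> 0"
proof -
  have "ln (max 1 (D j)) \<le> Lm D j" by (rule Lm_ge) auto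
  moreover have "0 \<le> ln (max 1 (D j))" by simp
  ultimately show ?thesis by linarith
qed

lemma Lm_lim:
  assumes "(\<lambda>n. D n powr (1 / real n)) \<longlonglongrightarrow> 1"
  shows "(\<lambda>j. Lm D j / real j) \<longlonglongrightarrow> 0"
proof -
  have al: "(\<lambda>l. ln (max 1 (D l)) / real l) \<longlonglongrightarrow> 0" by (rule a_lim[OF assms])
  show ?thesis unfolding LIMSEQ_iff
  proof (intro allI impI)
    fix r :: real assume r: "r > 0"
    obtain N where N: "\<And>l. l \<ge> N \<Longrightarrow> norm (ln (max 1 (D l)) / real l - 0) < r / 2"
      using al r unfolding LIMSEQ_iff by (metis half_gt_zero)
    show "\<exists>no. \<forall>n\<ge>no. norm (Lm D n / real n - 0) < r"
    proof (intro exI[of _ "max N 1"] allI impI)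
      fix j assume j: "j \<ge> max N 1"
      have "Lm D j \<in> (\<lambda>l. ln (max 1 (D l))) ` {j..2*j}"
        unfolding Lm_def by (rule Max_in) auto
      then obtain l where l: "l \<in> {j..2*j}" "Lm D j = ln (max 1 (D l))" by auto
      have lpos: "real l > 0" using l j by auto
      have "ln (max 1 (D l)) / real l < r / 2" using N[of l] l j by auto
      then have "ln (max 1 (D l)) < r / 2 * real l" using lpos by (simp add: divide_less_eq)
      also have "\<dots> \<le> r / 2 * (2 * real j)" using l r by (intro mult_left_mono) auto
      finally have "Lm D j < r * real j" using l by simp
      then have "Lm D j / real j < r" using j by (simp add: divide_less_eq)
      then show "norm (Lm D j / real j - 0) < r" using Lm_nonneg[of D j] by simp
    qed
  qed
qed

lemma conv_fun:
  fixes F :: "nat \<Rightarrow> (nat \<Rightarrow> nat)" and g :: "nat \<Rightarrow> nat"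
  assumes ev: "\<And>m. eventually (\<lambda>k. F k m = g m) sequentially"
  shows "F \<longlonglongrightarrow> g"
proof (rule topological_tendstoI)
  fix U :: "(nat \<Rightarrow> nat) set" assume U: "open U" "g \<in> U"
  then have "openin (product_topology (\<lambda>i. euclidean) UNIV) U" unfolding open_fun_def by auto
  from product_topology_open_contains_basis[OF this U(2)]
  obtain X where H: "g \<in> (\<Pi>\<^sub>E i\<in>UNIV. X i)" "\<And>i. openin euclidean (X i)"
      "finite {i. X i \<noteq> topspace euclidean}" "(\<Pi>\<^sub>E i\<in>UNIV. X i) \<subseteq> U"
    by auto
  have "eventually (\<lambda>k. \<forall>i\<in>{i. X i \<noteq> UNIV}. F k i = g i) sequentially"
    by (rule eventually_ball_finite) (use H(3) ev in auto)
  then show "eventually (\<lambda>k. F k \<in> U) sequentially"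
  proof (rule eventually_mono)
    fix k assume h: "\<forall>i\<in>{i. X i \<noteq> UNIV}. F k i = g i"
    have "F k \<in> (\<Pi>\<^sub>E i\<in>UNIV. X i)"
    proof -
      have "F k i \<in> X i" for i
        using h H(1) by (cases "X i = UNIV") auto
      then show ?thesis by auto
    qed
    then show "F k \<in> U" using H(4) by auto
  qed
qed

lemma coord_conv:
  fixes X :: "nat \<Rightarrow> (nat \<Rightarrow> nat)"
  assumes "X \<longlonglongrightarrow> x"
  shows "eventually (\<lambda>k. X k m = x m) sequentially"
proof -
  have "(\<lambda>k. X k m) \<longlonglongrightarrow> x m"
    using continuous_on_tendsto_compose[OF continuous_on_product_coordinates[of m] assms] by simp
  then have "eventually (\<lambda>k. X k m \<in> {x m}) sequentially"
    by (rule topological_tendstoD) (auto intro: open_discrete)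
  then show ?thesis by simp
qed

lemma unif_pext:
  fixes \<phi> :: "(nat \<Rightarrow> nat) \<Rightarrow> real"
  assumes K: "K \<subseteq> shift_space I A" "compact K"
    and cont: "continuous_on (shift_space I A) \<phi>" and e: "e > 0"
  shows "\<exists>N. \<forall>l\<ge>N. \<forall>x\<in>K. \<bar>\<phi> (pext I A l x) - \<phi> x\<bar> < e"
proof (rule ccontr)
  assume "\<not> ?thesis"
  then have h: "\<exists>l\<ge>N. \<exists>x\<in>K. \<not> \<bar>\<phi> (pext I A l x) - \<phi> x\<bar> < e" for N by auto
  have "\<forall>N. \<exists>l\<ge>N. \<exists>x\<in>K. \<bar>\<phi> (pext I A l x) - \<phi> x\<bar> \<ge> e"
  proof
    fix N
    obtain l x where lx: "l \<ge> N" "x \<in> K" "\<not> \<bar>\<phi> (pext I A l x) - \<phi> x\<bar> < e" using h[of N] by blast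
    show "\<exists>l\<ge>N. \<exists>x\<in>K. \<bar>\<phi> (pext I A l x) - \<phi> x\<bar> \<ge> e"
      using lx by (intro exI[of _ l] conjI bexI[of _ x]) auto
  qed
  then obtain L X where LX: "\<And>N. L N \<ge> N" "\<And>N. X N \<in> K" "\<And>N. \<bar>\<phi> (pext I A (L N) (X N)) - \<phi> (X N)\<bar> \<ge> e"
    by metis
  have "seq_compact K" using K(2) by (rule compact_imp_seq_compact)
  then obtain x r where x: "x \<in> K" and r: "strict_mono r" and conv: "(X \<circ> r) \<longlonglongrightarrow> x"
    using LX(2) by (metis seq_compactE)
  have xS: "x \<in> shift_space I A" using x K by auto
  have XS: "X (r k) \<in> shift_space I A" for k using LX(2) K by auto
  have c2: "(\<lambda>k. pext I A (L (r k)) (X (r k))) \<longlonglongrightarrow> x"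
  proof (rule conv_fun)
    fix m
    have "eventually (\<lambda>k. (X \<circ> r) k m = x m) sequentially" by (rule coord_conv[OF conv])
    moreover have "eventually (\<lambda>k. L (r k) > m) sequentially"
    proof (rule eventually_sequentiallyI[of "Suc m"])
      fix k assume "k \<ge> Suc m"
      then show "L (r k) > m" using LX(1)[of "r k"] seq_suble[OF r, of k] by linarith
    qed
    ultimately show "eventually (\<lambda>k. pext I A (L (r k)) (X (r k)) m = x m) sequentially"
      by eventually_elim (simp add: pext_def)
  qed
  have evS: "eventually (\<lambda>k. pext I A (L (r k)) (X (r k)) \<in> shift_space I A) sequentially"
  proof (rule eventually_sequentiallyI[of 1])
    fix k :: nat assume k: "k \<ge> 1"
    have "L (r k) \<ge> 1" using LX(1)[of "r k"] seq_suble[OF r, of k] k by linarith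
    then show "pext I A (L (r k)) (X (r k)) \<in> shift_space I A" by (rule pext_mem[OF XS])
  qed
  have t1: "(\<lambda>k. \<phi> (pext I A (L (r k)) (X (r k)))) \<longlonglongrightarrow> \<phi> x"
    by (rule continuous_on_tendsto_compose[OF cont c2 xS evS])
  have t2: "(\<lambda>k. \<phi> (X (r k))) \<longlonglongrightarrow> \<phi> x"
    using continuous_on_tendsto_compose[OF cont conv xS] XS by (simp add: comp_def)
  have "(\<lambda>k. \<bar>\<phi> (pext I A (L (r k)) (X (r k))) - \<phi> (X (r k))\<bar>) \<longlonglongrightarrow> \<bar>\<phi> x - \<phi> x\<bar>"
    by (intro tendsto_intros t1 t2)
  then have "(\<lambda>k. \<bar>\<phi> (pext I A (L (r k)) (X (r k))) - \<phi> (X (r k))\<bar>) \<longlonglongrightarrow> 0" by simp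
  then have "eventually (\<lambda>k. \<bar>\<phi> (pext I A (L (r k)) (X (r k))) - \<phi> (X (r k))\<bar> < e) sequentially"
    using e by (rule order_tendstoD)
  then obtain k where "\<bar>\<phi> (pext I A (L (r k)) (X (r k))) - \<phi> (X (r k))\<bar> < e"
    using eventually_sequentially by auto
  then show False using LX(3)[of "r k"] by linarith
qed

theorem lemma3p3:
  fixes I :: "nat set" and A :: "nat \<Rightarrow> nat \<Rightarrow> bool"
    and \<Psi> :: "nat \<Rightarrow> 'g::{group_add, countable}"
    and \<phi> :: "(nat \<Rightarrow> nat) \<Rightarrow> real" and \<alpha> :: real
  assumes "\<alpha> \<ge> 1"
    and "medium_variation I A \<phi>"
    and "asymp_symmetric I A \<Psi> \<phi> \<alpha>"
  shows "\<exists>(\<phi>s :: nat \<Rightarrow> (nat \<Rightarrow> nat) \<Rightarrow> real) (D :: nat \<Rightarrow> real).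
           (\<forall>j\<ge>1. holder_continuous I A (\<phi>s j) \<and> D j \<ge> 1 \<and>
                   asymp_symmetric I A \<Psi> (\<phi>s j) (\<alpha> * D j powr (1 / (2 * real j)))) \<and>
           (\<lambda>j. D j powr (1 / (2 * real j))) \<longlonglongrightarrow> 1 \<and>
           (\<forall>K. K \<subseteq> shift_space I A \<and> compact K \<longrightarrow>
              (\<forall>e>0. \<forall>\<^sub>F j in sequentially. \<forall>x\<in>K. \<bar>\<phi>s j x - \<phi> x\<bar> < e))"
proof -
  obtain D :: "nat \<Rightarrow> real" where cont: "continuous_on (shift_space I A) \<phi>"
    and Dlim: "(\<lambda>n. D n powr (1 / real n)) \<longlonglongrightarrow> 1"
    and mv: "\<forall>n. \<forall>w\<in>adm_words I A n. \<forall>x\<in>cylinder I A w. \<forall>y\<in>cylinder I A w.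
            exp (birkhoff_sum \<phi> n x - birkhoff_sum \<phi> n y) \<le> D n"
    using assms(2) unfolding medium_variation_def by blast
  define DD where "DD j = exp (4 * Lm D j)" for j
  have DDp: "DD j powr (1 / (2 * real j)) = exp (2 * Lm D j / real j)" if "j \<ge> 1" for j
    unfolding DD_def powr_def using that by (simp add: field_simps)
  have P1: "holder_continuous I A (Phi I A \<phi> j) \<and> DD j \<ge> 1 \<and>
       asymp_symmetric I A \<Psi> (Phi I A \<phi> j) (\<alpha> * DD j powr (1 / (2 * real j)))" if j: "j \<ge> 1" for j
  proof (intro conjI)
    show "holder_continuous I A (Phi I A \<phi> j)" by (rule holder_Phi[OF mv j])
    show "DD j \<ge> 1" unfolding DD_def using Lm_nonneg[of D j] by simp
    have L0: "Lm D j \<ge> 0" by (rule Lm_nonneg)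
    have "asymp_symmetric I A \<Psi> (Phi I A \<phi> j) (\<alpha> * exp (2 * Lm D j / real j))"
    proof (rule transfer[OF assms(3) mv])
      show "0 \<le> 2 * Lm D j" using L0 by simp
      show "0 \<le> 2 * Lm D j / real j" using L0 by simp
      fix w x assume x: "x \<in> cylinder I A w"
      then have xS: "x \<in> shift_space I A" by (simp add: cylinder_def)
      have "\<bar>birkhoff_sum (Phi I A \<phi> j) (length w) x - birkhoff_sum \<phi> (length w) x\<bar>
          \<le> 2 * (real (length w) + real j) * Lm D j / real j"
        by (rule pointwise[OF mv xS j Lm_ge])
      also have "\<dots> = 2 * Lm D j + 2 * Lm D j / real j * real (length w)"
        using j by (simp add: field_simps)
      finally show "\<bar>birkhoff_sum (Phi I A \<phi> j) (length w) x - birkhoff_sum \<phi> (length w) x\<bar>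
          \<le> 2 * Lm D j + 2 * Lm D j / real j * real (length w)" .
    qed
    then show "asymp_symmetric I A \<Psi> (Phi I A \<phi> j) (\<alpha> * DD j powr (1 / (2 * real j)))"
      using DDp[OF j] by simp
  qed
  have P2: "(\<lambda>j. DD j powr (1 / (2 * real j))) \<longlonglongrightarrow> 1"
  proof -
    have "(\<lambda>j. exp (2 * (Lm D j / real j))) \<longlonglongrightarrow> exp (2 * 0)"
      by (intro tendsto_intros Lm_lim[OF Dlim])
    then have "(\<lambda>j. exp (2 * Lm D j / real j)) \<longlonglongrightarrow> 1" by simp
    then show ?thesis
      by (rule Lim_transform_eventually) (use DDp in \<open>auto intro!: eventually_sequentiallyI[of 1]\<close>)
  qed
  have P3: "\<forall>e>0. \<forall>\<^sub>F j in sequentially. \<forall>x\<in>K. \<bar>Phi I A \<phi> j x - \<phi> x\<bar> < e"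
    if K: "K \<subseteq> shift_space I A" "compact K" for K
  proof (intro allI impI)
    fix e :: real assume e: "e > 0"
    obtain N where N: "\<And>l x. l \<ge> N \<Longrightarrow> x \<in> K \<Longrightarrow> \<bar>\<phi> (pext I A l x) - \<phi> x\<bar> < e / 2"
      using unif_pext[OF K cont, of "e/2"] e by auto
    show "\<forall>\<^sub>F j in sequentially. \<forall>x\<in>K. \<bar>Phi I A \<phi> j x - \<phi> x\<bar> < e"
    proof (rule eventually_sequentiallyI[of "max N 1"], intro ballI)
      fix j x assume j: "max N 1 \<le> j" and x: "x \<in> K"
      have "Phi I A \<phi> j x - \<phi> x = (\<Sum>l\<in>{j+1..2*j}. \<phi> (pext I A l x) - \<phi> x) / real j"
        using j unfolding Phi_def by (simp add: sum_subtractf field_simps)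
      moreover have "\<bar>\<Sum>l\<in>{j+1..2*j}. \<phi> (pext I A l x) - \<phi> x\<bar> \<le> real j * (e / 2)"
      proof -
        have "\<bar>\<Sum>l\<in>{j+1..2*j}. \<phi> (pext I A l x) - \<phi> x\<bar> \<le> (\<Sum>l\<in>{j+1..2*j}. \<bar>\<phi> (pext I A l x) - \<phi> x\<bar>)"
          by (rule sum_abs)
        also have "\<dots> \<le> (\<Sum>l\<in>{j+1..2*j}. e / 2)"
          using j x by (intro sum_mono less_imp_le N) auto
        finally show ?thesis by simp
      qed
      ultimately have "\<bar>Phi I A \<phi> j x - \<phi> x\<bar> \<le> e / 2"
        using j by (simp add: divide_le_eq mult.commute)
      then show "\<bar>Phi I A \<phi> j x - \<phi> x\<bar> < e" using e by linarith
    qed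
  qed
  show ?thesis
    by (rule exI[of _ "Phi I A \<phi>"], rule exI[of _ DD]) (use P1 P2 P3 in blast)
qed

end
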